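(* Let $r\ge1$ and $G\subset\mathbb{Z}_2^r$ a subgroup with $1^r\in G$, and let $S_G$ be as below. Then $Z_{S_G}:=\sum_{\mu}\dim(S_G)_\mu\,\theta_\mu=\sum_{d\in D_G}\sum_{\alpha\in C_G}2^{-|d|_l}\theta_{(d,d_\perp\alpha)}$; in particular $\dim(S_G)_{(d,d_\perp\alpha)}=[C_G^d:\Delta^d]=2^{-|d|_l}\#C_G^d$ for any $d\in D_G$, $\alpha\in C_G$, where $C_G^d=C_G\cap\mathbb{Z}_2^d$.
   Context: Identify $\mathrm{IS}=\{0,\frac12,\frac1{16}\}$ with $\{(d,c)\in\mathbb{Z}_2^2:dc=0\}$ via $0\leftrightarrow(0,0)$, $\frac12\leftrightarrow(0,1)$, $\frac1{16}\leftrightarrow(1,0)$, and componentwise $\mathrm{IS}^{(r,r)}=\mathrm{IS}^r\times\mathrm{IS}^r$ with pairs $(d,c)\in(\mathbb{Z}_2^{r+r})^2$ with $dc=0$ (componentwise product). $\theta_\mu$ ($\mu\in\mathrm{IS}^{(r,r)}$) is a formal basis of a vector space. For $c\in\mathbb{Z}_2^{r+r}$, $|c|_l,|c|_r$ are numbers of ones among first/last $r$ coordinates, $|c|=|c|_l-|c|_r$, $d_\perp=1^{2r}+d$, $\mathbb{Z}_2^d=\{\alpha:d\alpha=\alpha\}$; $A^\perp=\{\beta:|\beta a|\in2\mathbb{Z}\ \forall a\in A\}$. Construction: $\Delta(g)=(g,g)$; $D_G=\Delta G$, $C_G=D_G^\perp$. Let $C^{\rm even}_{r,r}=\{\alpha:|\alpha|\in2\mathbb{Z}\}$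 with ordered basis $(v_1,\dots,v_{2r-1})=(\Delta e_1,\dots,\Delta e_r,\tilde e_1-\tilde e_2,\dots,\tilde e_{r-1}-\tilde e_r)$, $\tilde e_i=(e_i,0)$; $\varepsilon$ is the bimultiplicative map to $\{\pm1\}$ with $\varepsilon(v_i,v_i)=(-1)^{|v_i|/2}$, $\varepsilon(v_i,v_j)=1$ ($i<j$), $(-1)^{|v_iv_j|}$ ($i>j$). $\mathbb{C}[\hat C_G]$ has basis $e_\alpha$ ($\alpha\in C_G$), $e_\alpha e_\beta=\varepsilon(\alpha,\beta)e_{\alpha+\beta}$. For $d\in\Delta\mathbb{Z}_2^r$, $\Delta^d=\mathbb{Z}_2^d\cap\Delta\mathbb{Z}_2^r$, and $\{e_\gamma\}_{\gamma\in\Delta^d}$ spans a copy of $\mathbb{C}[\Delta^d]$. For $d\in D_G$, $A_G(d)=\mathbb{C}[\hat C_G]\otimes_{\mathbb{C}[\Delta^d]}\mathbb{C}t_d$ (trivial module), $S_G=\bigoplus_{d\in D_G}A_G(d)$, graded by putting $e_\alpha\cdot t_d$ in degree $(d,d_\perp\alpha)$. *)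

theory Defs
  imports Complex_Main "HOL-Library.Function_Algebras"
begin

section \<open>Binary vectors: Z_2^n identified with subsets of {..<n}\<close>

definition Z2 :: "nat \<Rightarrow> nat set set" where
  "Z2 n = Pow {..<n}"

text \<open>componentwise sum (symmetric difference) and componentwise product (intersection)\<close>
definition vadd :: "nat set \<Rightarrow> nat set \<Rightarrow> nat set" where
  "vadd a b = (a - b) \<union> (b - a)"

definition vmul :: "nat set \<Rightarrow> nat set \<Rightarrow> nat set" where
  "vmul a b = a \<inter> b"

definition wl :: "nat \<Rightarrow> nat set \<Rightarrow> nat" where
  "wl r c = card (c \<inter> {..<r})"

definition wr :: "nat \<Rightarrow> nat set \<Rightarrow> nat" where
  "wr r c = card (c \<inter> {r..<2*r})"

definition wt :: "nat \<Rightarrow> nat set \<Rightarrow> int" where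
  "wt r c = int (wl r c) - int (wr r c)"

definition ones :: "nat \<Rightarrow> nat set" where
  "ones n = {..<n}"

definition dperp :: "nat \<Rightarrow> nat set \<Rightarrow> nat set" where
  "dperp r d = vadd (ones (2*r)) d"

definition Z2sub :: "nat \<Rightarrow> nat set \<Rightarrow> nat set set" where
  "Z2sub r d = {\<alpha> \<in> Z2 (2*r). vmul d \<alpha> = \<alpha>}"

definition perp :: "nat \<Rightarrow> nat set set \<Rightarrow> nat set set" where
  "perp r A = {\<beta> \<in> Z2 (2*r). \<forall>a\<in>A. even (wt r (vmul \<beta> a))}"

definition Delta :: "nat \<Rightarrow> nat set \<Rightarrow> nat set" where
  "Delta r g = g \<union> (\<lambda>i. i + r) ` g"

definition DG :: "nat \<Rightarrow> nat set set \<Rightarrow> nat set set" where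
  "DG r G = Delta r ` G"

definition CG :: "nat \<Rightarrow> nat set set \<Rightarrow> nat set set" where
  "CG r G = perp r (DG r G)"

definition CGd :: "nat \<Rightarrow> nat set set \<Rightarrow> nat set \<Rightarrow> nat set set" where
  "CGd r G d = CG r G \<inter> Z2sub r d"

definition Deltad :: "nat \<Rightarrow> nat set \<Rightarrow> nat set set" where
  "Deltad r d = Z2sub r d \<inter> Delta r ` Z2 r"

definition Ceven :: "nat \<Rightarrow> nat set set" where
  "Ceven r = {\<alpha> \<in> Z2 (2*r). even (wt r \<alpha>)}"

text \<open>Ordered basis (v_1,...,v_{2r-1}) of C^even, indexed from 0:
  v_i = Delta e_i for i < r, and v_{r+j} = e~_j - e~_{j+1} for j < r-1
  (coordinates 0-based; over Z_2, e~_j - e~_{j+1} = {j, j+1}).\<close>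
definition vbas :: "nat \<Rightarrow> nat \<Rightarrow> nat set" where
  "vbas r i = (if i < r then Delta r {i} else {i - r, i - r + 1})"

definition epsb :: "nat \<Rightarrow> nat \<Rightarrow> nat \<Rightarrow> complex" where
  "epsb r i j =
     (if i = j then (-1) powi (wt r (vbas r i) div 2)
      else if i < j then 1
      else (-1) powi (wt r (vmul (vbas r i) (vbas r j))))"

text \<open>The bimultiplicative map epsilon on C^even with prescribed values on the basis.
  Convention: it is set to 1 outside C^even x C^even (only used on C_G, a subset of C^even).\<close>
definition eps :: "nat \<Rightarrow> nat set \<Rightarrow> nat set \<Rightarrow> complex" where
  "eps r = (THE f.
      (\<forall>\<alpha> \<beta>. (\<alpha> \<notin> Ceven r \<or> \<beta> \<notin> Ceven r) \<longrightarrow> f \<alpha> \<beta> = 1) \<and>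
      (\<forall>\<alpha>\<in>Ceven r. \<forall>\<beta>\<in>Ceven r. \<forall>\<gamma>\<in>Ceven r.
          f (vadd \<alpha> \<beta>) \<gamma> = f \<alpha> \<gamma> * f \<beta> \<gamma> \<and> f \<alpha> (vadd \<beta> \<gamma>) = f \<alpha> \<beta> * f \<alpha> \<gamma>) \<and>
      (\<forall>i<2*r-1. \<forall>j<2*r-1. f (vbas r i) (vbas r j) = epsb r i j))"

section \<open>The twisted group algebra C[hat C_G] (elements: coefficient functions supported on C_G)\<close>

definition ebas :: "nat set \<Rightarrow> nat set \<Rightarrow> complex" where
  "ebas \<alpha> = (\<lambda>\<beta>. if \<beta> = \<alpha> then 1 else 0)"

definition twmul :: "nat \<Rightarrow> nat set set \<Rightarrow> (nat set \<Rightarrow> complex) \<Rightarrow> (nat set \<Rightarrow> complex)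
    \<Rightarrow> (nat set \<Rightarrow> complex)" where
  "twmul r G x y = (\<lambda>\<beta>. \<Sum>\<alpha>\<in>CG r G. \<Sum>\<alpha>'\<in>CG r G.
       if vadd \<alpha> \<alpha>' = \<beta> then eps r \<alpha> \<alpha>' * x \<alpha> * y \<alpha>' else 0)"

definition suppIn :: "('a \<Rightarrow> complex) \<Rightarrow> 'a set \<Rightarrow> bool" where
  "suppIn x A \<longleftrightarrow> (\<forall>p. x p \<noteq> 0 \<longrightarrow> p \<in> A)"

definition cscale :: "complex \<Rightarrow> ('a \<Rightarrow> complex) \<Rightarrow> ('a \<Rightarrow> complex)" where
  "cscale c f = (\<lambda>p. c * f p)"

text \<open>Free space with basis e_alpha (x) t_d, (d,alpha) in D_G x C_G; i.e. the direct sum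
  over d in D_G of C[hat C_G] (x)_C C t_d.  Elements are functions on pairs (d,alpha).\<close>
definition Sfree :: "nat \<Rightarrow> nat set set \<Rightarrow> (nat set \<times> nat set \<Rightarrow> complex) set" where
  "Sfree r G = {f. suppIn f (DG r G \<times> CG r G)}"

text \<open>Relations defining the tensor product over C[Delta^d] with the trivial module C t_d:
  (x e_gamma) (x) t_d - x (x) t_d, for x in C[hat C_G], gamma in Delta^d, d in D_G.\<close>
definition Srelgen :: "nat \<Rightarrow> nat set set \<Rightarrow> (nat set \<times> nat set \<Rightarrow> complex) set" where
  "Srelgen r G = {(\<lambda>(d', \<beta>). if d' = d then (twmul r G x (ebas \<gamma>) \<beta> - x \<beta>) else 0)
       | d x \<gamma>. d \<in> DG r G \<and> suppIn x (CG r G) \<and> \<gamma> \<in> Deltad r d}"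

definition Srel :: "nat \<Rightarrow> nat set set \<Rightarrow> (nat set \<times> nat set \<Rightarrow> complex) set" where
  "Srel r G = module.span cscale (Srelgen r G)"

definition Shom :: "nat \<Rightarrow> nat set set \<Rightarrow> nat set \<times> nat set \<Rightarrow> (nat set \<times> nat set \<Rightarrow> complex) set" where
  "Shom r G \<mu> = module.span cscale
      {(\<lambda>p. if p = (d, \<alpha>) then 1 else 0) | d \<alpha>.
         d \<in> DG r G \<and> \<alpha> \<in> CG r G \<and> (d, vmul (dperp r d) \<alpha>) = \<mu>}"

text \<open>dim (S_G)_mu: dimension of the image of the degree-mu component in the quotient
  S_G = Sfree / Srel, i.e. dim((Shom + Srel)/Srel) = dim(Shom + Srel) - dim Srel.\<close>
definition dimSG :: "nat \<Rightarrow> nat set set \<Rightarrow> nat set \<times> nat set \<Rightarrow> nat" where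
  "dimSG r G \<mu> = vector_space.dim cscale (Shom r G \<mu> \<union> Srel r G)
                 - vector_space.dim cscale (Srel r G)"

definition ISrr :: "nat \<Rightarrow> (nat set \<times> nat set) set" where
  "ISrr r = {(d, c). d \<in> Z2 (2*r) \<and> c \<in> Z2 (2*r) \<and> vmul d c = {}}"

definition is_subgroup_Z2 :: "nat \<Rightarrow> nat set set \<Rightarrow> bool" where
  "is_subgroup_Z2 r G \<longleftrightarrow> G \<subseteq> Z2 r \<and> {} \<in> G \<and> (\<forall>g\<in>G. \<forall>h\<in>G. vadd g h \<in> G)"

end

theory Submission
  imports Defs
begin

lemma vadd_Int: "vadd x y \<inter> z = vadd (x \<inter> z) (y \<inter> z)" by (auto simp: vadd_def)
definition sd :: "'a set \<Rightarrow> 'a set \<Rightarrow> 'a set" where "sd x y = (x - y) \<union> (y - x)"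
lemma vadd_sd: "vadd = sd" by (simp add: fun_eq_iff vadd_def sd_def)
lemma sd_Times1: "sd x y \<times> z = sd (x \<times> z) (y \<times> z)" by (auto simp: sd_def)
lemma sd_Times2: "z \<times> sd x y = sd (z \<times> x) (z \<times> y)" by (auto simp: sd_def)
lemma sd_Int: "sd x y \<inter> z = sd (x \<inter> z) (y \<inter> z)" by (auto simp: sd_def)
lemma vadd_comm: "vadd x y = vadd y x" by (auto simp: vadd_def)
lemma vadd_assoc: "vadd (vadd x y) z = vadd x (vadd y z)" by (auto simp: vadd_def)
lemma vadd_self[simp]: "vadd x x = {}" by (auto simp: vadd_def)
lemma vadd_empty[simp]: "vadd x {} = x" "vadd {} x = x" by (auto simp: vadd_def)
lemma vadd_cancel: "vadd x (vadd x y) = y" by (auto simp: vadd_def)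
lemma finite_vadd[simp]: "finite x \<Longrightarrow> finite y \<Longrightarrow> finite (vadd x y)" by (simp add: vadd_def)

lemma card_sd:
  assumes "finite A" "finite B"
  shows "card (sd A B) + 2 * card (A \<inter> B) = card A + card B"
proof -
  have e1: "sd A B = (A - B) \<union> (B - A)" by (simp add: sd_def)
  have c1: "card (sd A B) = card (A - B) + card (B - A)"
    unfolding e1 using assms by (intro card_Un_disjoint) auto
  have "card A = card ((A - B) \<union> (A \<inter> B))" by (metis Un_Diff_Int)
  also have "\<dots> = card (A - B) + card (A \<inter> B)" using assms by (intro card_Un_disjoint) auto
  finally have "card A = card (A - B) + card (A \<inter> B)" .
  moreover have "card B = card ((B - A) \<union> (A \<inter> B))" by (metis Un_Diff_Int Int_commute)
  moreover have "card ((B - A) \<union> (A \<inter> B)) = card (B - A) + card (A \<inter> B)" using assms by (intro card_Un_disjoint) auto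
  ultimately show ?thesis using c1 by simp
qed

lemma even_card_sd:
  assumes "finite A" "finite B"
  shows "even (card (sd A B) + card A + card B)"
proof -
  have "card (sd A B) + 2 * card (A \<inter> B) = card A + card B" by (rule card_sd[OF assms])
  then show ?thesis by presburger
qed

lemma even_card_vadd:
  assumes "finite A" "finite B"
  shows "even (card (vadd A B) + card A + card B)"
  using even_card_sd[OF assms] by (simp add: vadd_sd)


definition Lp :: "nat \<Rightarrow> nat set \<Rightarrow> nat set" where "Lp r a = a \<inter> {..<r}"
definition Rp :: "nat \<Rightarrow> nat set \<Rightarrow> nat set" where "Rp r a = {i. i < r \<and> i + r \<in> a}"
definition up :: "nat \<Rightarrow> nat set \<Rightarrow> nat set" where "up r a = vadd (Lp r a) (Rp r a)"
definition Bf :: "nat \<Rightarrow> nat set \<Rightarrow> nat set \<Rightarrow> nat" where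
  "Bf r a b = card (up r a \<inter> Rp r b) + card ((up r a \<times> up r b) \<inter> {(p,q). q < p})"
definition f0 :: "nat \<Rightarrow> nat set \<Rightarrow> nat set \<Rightarrow> complex" where
  "f0 r a b = (if a \<in> Ceven r \<and> b \<in> Ceven r then (-1)^(Bf r a b) else 1)"

lemma Lp_sub: "Lp r a \<subseteq> {..<r}" by (auto simp: Lp_def)
lemma Rp_sub: "Rp r a \<subseteq> {..<r}" by (auto simp: Rp_def)
lemma up_sub: "up r a \<subseteq> {..<r}" by (auto simp: up_def vadd_def Lp_def Rp_def)
lemma fin_Rp[simp]: "finite (Rp r a)" using Rp_sub finite_subset by blast
lemma fin_up[simp]: "finite (up r a)" using up_sub finite_subset by blast

lemma Lp_vadd: "Lp r (vadd a b) = vadd (Lp r a) (Lp r b)" by (auto simp: Lp_def vadd_def)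
lemma Rp_vadd: "Rp r (vadd a b) = vadd (Rp r a) (Rp r b)" by (auto simp: Rp_def vadd_def)
lemma up_vadd: "up r (vadd a b) = vadd (up r a) (up r b)"
  unfolding up_def Lp_vadd Rp_vadd by (auto simp: vadd_def)

lemma even3:
  assumes "even (x1 + a1 + b1)" "even (x2 + a2 + b2)"
  shows "even ((x1 + x2) + (a1 + a2) + (b1 + b2::nat))"
  using assms by presburger

lemma Bf_vadd1: "even (Bf r (vadd a b) c + Bf r a c + Bf r b c)"
proof -
  let ?T = "{(p::nat,q). q < p}"
  have e1: "up r (vadd a b) \<inter> Rp r c = sd (up r a \<inter> Rp r c) (up r b \<inter> Rp r c)"
    by (simp only: up_vadd) (simp add: vadd_sd sd_Int)
  have e2: "(up r (vadd a b) \<times> up r c) \<inter> ?T = sd ((up r a \<times> up r c) \<inter> ?T) ((up r b \<times> up r c) \<inter> ?T)"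
    by (simp only: up_vadd) (simp add: vadd_sd sd_Times1 sd_Int)
  have "even (card (up r (vadd a b) \<inter> Rp r c) + card (up r a \<inter> Rp r c) + card (up r b \<inter> Rp r c))"
    unfolding e1 by (rule even_card_sd) auto
  moreover have "even (card ((up r (vadd a b) \<times> up r c) \<inter> ?T) + card ((up r a \<times> up r c) \<inter> ?T) + card ((up r b \<times> up r c) \<inter> ?T))"
    unfolding e2 by (rule even_card_sd) auto
  ultimately show ?thesis unfolding Bf_def by (rule even3)
qed

lemma Bf_vadd2: "even (Bf r c (vadd a b) + Bf r c a + Bf r c b)"
proof -
  let ?T = "{(p::nat,q). q < p}"
  have e1: "up r c \<inter> Rp r (vadd a b) = sd (up r c \<inter> Rp r a) (up r c \<inter> Rp r b)"
    by (simp only: Rp_vadd) (auto simp: vadd_sd sd_def)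
  have e2: "(up r c \<times> up r (vadd a b)) \<inter> ?T = sd ((up r c \<times> up r a) \<inter> ?T) ((up r c \<times> up r b) \<inter> ?T)"
    by (simp only: up_vadd) (simp add: vadd_sd sd_Times2 sd_Int)
  have "even (card (up r c \<inter> Rp r (vadd a b)) + card (up r c \<inter> Rp r a) + card (up r c \<inter> Rp r b))"
    unfolding e1 by (rule even_card_sd) auto
  moreover have "even (card ((up r c \<times> up r (vadd a b)) \<inter> ?T) + card ((up r c \<times> up r a) \<inter> ?T) + card ((up r c \<times> up r b) \<inter> ?T))"
    unfolding e2 by (rule even_card_sd) auto
  ultimately show ?thesis unfolding Bf_def by (rule even3)
qed

lemma sign3:
  assumes "even (m + n + k)"
  shows "(-1::complex)^m = (-1)^n * (-1)^k"
proof -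
  have "(-1::complex)^n * (-1)^k = (-1)^(n+k)" by (simp add: power_add)
  also have "\<dots> = (-1)^m" using assms by (simp add: minus_one_power_iff) presburger
  finally show ?thesis by simp
qed

lemma card_split2:
  assumes "a \<subseteq> {..<2*r}"
  shows "card a = wl r a + wr r a"
proof -
  have "a = (a \<inter> {..<r}) \<union> (a \<inter> {r..<2*r})" using assms by auto
  then have "card a = card ((a \<inter> {..<r}) \<union> (a \<inter> {r..<2*r}))" by simp
  also have "\<dots> = card (a \<inter> {..<r}) + card (a \<inter> {r..<2*r})"
    by (intro card_Un_disjoint) auto
  finally show ?thesis by (simp add: wl_def wr_def)
qed

lemma Ceven_iff: "a \<in> Ceven r \<longleftrightarrow> a \<subseteq> {..<2*r} \<and> even (card a)"
proof -
  have "even (wt r a) \<longleftrightarrow> even (wl r a + wr r a)"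
    unfolding wt_def by (metis even_diff even_of_nat of_nat_add)
  then show ?thesis unfolding Ceven_def Z2_def using card_split2 by auto
qed

lemma Ceven_vadd: "a \<in> Ceven r \<Longrightarrow> b \<in> Ceven r \<Longrightarrow> vadd a b \<in> Ceven r"
  unfolding Ceven_iff
proof (intro conjI)
  assume a: "a \<subseteq> {..<2 * r} \<and> even (card a)" and b: "b \<subseteq> {..<2 * r} \<and> even (card b)"
  then show "vadd a b \<subseteq> {..<2 * r}" by (auto simp: vadd_def)
  have "finite a" "finite b" using a b finite_subset by auto
  from even_card_vadd[OF this] show "even (card (vadd a b))" using a b by (metis even_add)
qed

lemma f0_vadd1:
  assumes "a \<in> Ceven r" "b \<in> Ceven r" "c \<in> Ceven r"
  shows "f0 r (vadd a b) c = f0 r a c * f0 r b c"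
  using assms Ceven_vadd[OF assms(1,2)] sign3[OF Bf_vadd1] by (simp add: f0_def)

lemma f0_vadd2:
  assumes "a \<in> Ceven r" "b \<in> Ceven r" "c \<in> Ceven r"
  shows "f0 r c (vadd a b) = f0 r c a * f0 r c b"
  using assms Ceven_vadd[OF assms(1,2)] sign3[OF Bf_vadd2] by (simp add: f0_def)


lemma Delta_single: "Delta r {i} = {i, i + r}" by (auto simp: Delta_def)

lemma vbas_lo: "i < r \<Longrightarrow> vbas r i = {i, i + r}" by (simp add: vbas_def Delta_single)
lemma vbas_hi: "r \<le> i \<Longrightarrow> vbas r i = {i - r, i - r + 1}" by (simp add: vbas_def)

lemma wt_left: "x \<subseteq> {..<r} \<Longrightarrow> wt r x = int (card x)"
proof -
  assume x: "x \<subseteq> {..<r}"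
  then have "x \<inter> {..<r} = x" "x \<inter> {r..<2*r} = {}" by auto
  then show ?thesis by (simp add: wt_def wl_def wr_def)
qed

lemma wt_pair: "i < r \<Longrightarrow> wt r {i, i + r} = 0"
proof -
  assume i: "i < r"
  then have "{i, i + r} \<inter> {..<r} = {i}" "{i, i + r} \<inter> {r..<2*r} = {i + r}" by auto
  then show ?thesis by (simp add: wt_def wl_def wr_def)
qed

lemma vbas_Ceven:
  assumes "i < 2*r - 1" shows "vbas r i \<in> Ceven r"
proof (cases "i < r")
  case True
  then show ?thesis by (simp add: vbas_lo Ceven_iff)
next
  case False
  then show ?thesis using assms by (simp add: vbas_hi Ceven_iff; arith)
qed

inductive_set gen :: "nat \<Rightarrow> nat set set" for r where
  gbas: "i < 2*r - 1 \<Longrightarrow> vbas r i \<in> gen r"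
| gadd: "a \<in> gen r \<Longrightarrow> b \<in> gen r \<Longrightarrow> vadd a b \<in> gen r"

lemma gen_Ceven: "a \<in> gen r \<Longrightarrow> a \<in> Ceven r"
  by (induction rule: gen.induct) (auto intro: vbas_Ceven Ceven_vadd)

lemma empty_gen: "r \<ge> 1 \<Longrightarrow> {} \<in> gen r"
  using gadd[OF gbas gbas, of 0 r 0] by simp

lemma Delta_gen:
  assumes r: "r \<ge> 1"
  shows "finite g \<Longrightarrow> g \<subseteq> {..<r} \<Longrightarrow> Delta r g \<in> gen r"
proof (induction g rule: finite_induct)
  case empty
  then show ?case using empty_gen[OF r] by (simp add: Delta_def)
next
  case (insert i g)
  have e: "Delta r (insert i g) = vadd (Delta r {i}) (Delta r g)"
    using insert by (auto simp: Delta_def vadd_def)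
  have "Delta r {i} = vbas r i" using insert by (simp add: vbas_def)
  moreover have "i < 2*r - 1" using insert r by auto
  ultimately have "Delta r {i} \<in> gen r" using gbas by metis
  then show ?case unfolding e using insert by (auto intro: gadd)
qed

lemma even_gen:
  assumes r: "r \<ge> 1"
  shows "\<forall>x. x \<subseteq> {..<n} \<longrightarrow> n \<le> r \<longrightarrow> even (card x) \<longrightarrow> x \<in> gen r"
proof (induction n)
  case 0
  then show ?case using empty_gen[OF r] by auto
next
  case (Suc n)
  show ?case
  proof (intro allI impI)
    fix x assume x: "x \<subseteq> {..<Suc n}" and n: "Suc n \<le> r" and ev: "even (card x)"
    show "x \<in> gen r"
    proof (cases "n \<in> x")
      case False
      then have "x \<subseteq> {..<n}" using x by (force simp: subset_iff less_Suc_eq)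
      then show ?thesis using Suc.IH n ev by auto
    next
      case True
      have n0: "n \<noteq> 0"
      proof
        assume "n = 0"
        then have "x = {0}" using x True by auto
        then show False using ev by simp
      qed
      define p where "p = {n - 1, n}"
      have cp: "card p = 2" using n0 by (simp add: p_def)
      define x' where "x' = vadd x p"
      have x'sub: "x' \<subseteq> {..<n}" using x True n0 by (auto simp: x'_def p_def vadd_def)
      have "finite x" using x finite_subset by blast
      then have "even (card x' + card x + card p)" unfolding x'_def by (intro even_card_vadd) (auto simp: p_def)
      then have "even (card x')" using ev cp by (metis even_add even_numeral)
      then have x'g: "x' \<in> gen r" using Suc.IH n x'sub by auto
      have "vbas r (r + (n - 1)) = p" using n0 by (simp add: vbas_hi p_def)
      moreover have "r + (n - 1) < 2*r - 1" using n n0 by auto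
      ultimately have pg: "p \<in> gen r" using gbas by metis
      have "x = vadd x' p" by (simp add: x'_def vadd_assoc)
      then show ?thesis using gadd[OF x'g pg] by simp
    qed
  qed
qed

lemma card_Rp:
  assumes "a \<subseteq> {..<2*r}" shows "card (Rp r a) = wr r a"
proof -
  have "(\<lambda>i. i + r) ` Rp r a = a \<inter> {r..<2*r}"
  proof
    show "(\<lambda>i. i + r) ` Rp r a \<subseteq> a \<inter> {r..<2 * r}" by (auto simp: Rp_def)
    show "a \<inter> {r..<2 * r} \<subseteq> (\<lambda>i. i + r) ` Rp r a"
    proof
      fix x assume "x \<in> a \<inter> {r..<2 * r}"
      then have "x - r \<in> Rp r a" "x = (x - r) + r" by (auto simp: Rp_def)
      then show "x \<in> (\<lambda>i. i + r) ` Rp r a" by blast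
    qed
  qed
  moreover have "inj_on (\<lambda>i. i + r) (Rp r a)" by (auto simp: inj_on_def)
  ultimately show ?thesis unfolding wr_def by (metis card_image)
qed

lemma decomp:
  assumes "a \<subseteq> {..<2*r}"
  shows "a = vadd (Delta r (Rp r a)) (up r a)"
proof -
  have "x \<in> a \<longleftrightarrow> x \<in> vadd (Delta r (Rp r a)) (up r a)" for x
  proof (cases "x < r")
    case True
    then have "x \<in> Delta r (Rp r a) \<longleftrightarrow> x + r \<in> a" by (auto simp: Delta_def Rp_def)
    moreover have "x \<in> up r a \<longleftrightarrow> \<not> (x \<in> a \<longleftrightarrow> x + r \<in> a)" using True by (auto simp: up_def Lp_def Rp_def vadd_def)
    ultimately show ?thesis by (auto simp: vadd_def)
  next
    case False
    then have "x \<notin> up r a" using up_sub by blast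
    moreover have "x \<in> Delta r (Rp r a) \<longleftrightarrow> x \<in> a"
    proof
      assume "x \<in> Delta r (Rp r a)"
      then show "x \<in> a" using False by (auto simp: Delta_def Rp_def)
    next
      assume xa: "x \<in> a"
      then have "x < 2 * r" using assms by auto
      then have "x - r \<in> Rp r a" "x = (x - r) + r" using False xa by (auto simp: Rp_def)
      then show "x \<in> Delta r (Rp r a)" unfolding Delta_def by blast
    qed
    ultimately show ?thesis by (auto simp: vadd_def)
  qed
  then show ?thesis by blast
qed

lemma Ceven_gen:
  assumes r: "r \<ge> 1" and a: "a \<in> Ceven r"
  shows "a \<in> gen r"
proof -
  have asub: "a \<subseteq> {..<2*r}" and ev: "even (card a)" using a by (auto simp: Ceven_iff)
  have "Delta r (Rp r a) \<in> gen r" using Delta_gen[OF r] Rp_sub by auto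
  moreover have "up r a \<in> gen r"
  proof -
    have "card a = card (Lp r a) + card (Rp r a)"
      using card_split2[OF asub] card_Rp[OF asub] by (simp add: wl_def Lp_def)
    moreover have "even (card (up r a) + card (Lp r a) + card (Rp r a))"
      unfolding up_def by (rule even_card_vadd) (auto intro: finite_subset[OF Lp_sub])
    ultimately have "even (card (up r a))" using ev by (metis even_add)
    then show ?thesis using even_gen[OF r, of r] up_sub by auto
  qed
  ultimately show ?thesis using decomp[OF asub] gadd by metis
qed


definition Peps :: "nat \<Rightarrow> (nat set \<Rightarrow> nat set \<Rightarrow> complex) \<Rightarrow> bool" where
  "Peps r f \<longleftrightarrow>
      (\<forall>\<alpha> \<beta>. (\<alpha> \<notin> Ceven r \<or> \<beta> \<notin> Ceven r) \<longrightarrow> f \<alpha> \<beta> = 1) \<and>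
      (\<forall>\<alpha>\<in>Ceven r. \<forall>\<beta>\<in>Ceven r. \<forall>\<gamma>\<in>Ceven r.
          f (vadd \<alpha> \<beta>) \<gamma> = f \<alpha> \<gamma> * f \<beta> \<gamma> \<and> f \<alpha> (vadd \<beta> \<gamma>) = f \<alpha> \<beta> * f \<alpha> \<gamma>) \<and>
      (\<forall>i<2*r-1. \<forall>j<2*r-1. f (vbas r i) (vbas r j) = epsb r i j)"

lemma eps_Peps: "eps r = (THE f. Peps r f)"
  unfolding eps_def Peps_def by simp

lemma Peps_unique:
  assumes r: "r \<ge> 1" and f: "Peps r f" and g: "Peps r g"
  shows "f = g"
proof -
  have s1: "\<forall>j<2*r-1. f a (vbas r j) = g a (vbas r j)" if "a \<in> gen r" for a
    using that
  proof (induction rule: gen.induct)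
    case (gbas i)
    then show ?case using f g by (simp add: Peps_def)
  next
    case (gadd a b)
    have "a \<in> Ceven r" "b \<in> Ceven r" using gadd gen_Ceven by auto
    then show ?case using gadd.IH f g vbas_Ceven unfolding Peps_def by (metis (no_types, lifting))
  qed
  have s2: "\<forall>a\<in>Ceven r. f a b = g a b" if "b \<in> gen r" for b
    using that
  proof (induction rule: gen.induct)
    case (gbas i)
    then show ?case using s1 Ceven_gen[OF r] by blast
  next
    case (gadd b1 b2)
    have "b1 \<in> Ceven r" "b2 \<in> Ceven r" using gadd gen_Ceven by auto
    then show ?case using gadd.IH f g unfolding Peps_def by (metis (no_types, lifting))
  qed
  show ?thesis
  proof (intro ext)
    fix a b
    show "f a b = g a b"
    proof (cases "a \<in> Ceven r \<and> b \<in> Ceven r")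
      case True
      then show ?thesis using s2 Ceven_gen[OF r] by blast
    next
      case False
      then show ?thesis using f g by (simp add: Peps_def)
    qed
  qed
qed

lemma up_lo: "i < r \<Longrightarrow> up r {i, i + r} = {}"
  by (auto simp: up_def Lp_def Rp_def vadd_def)
lemma Rp_lo: "i < r \<Longrightarrow> Rp r {i, i + r} = {i}"
  by (auto simp: Rp_def)
lemma up_hi: "k + 1 < r \<Longrightarrow> up r {k, k + 1} = {k, k + 1}"
  by (auto simp: up_def Lp_def Rp_def vadd_def)
lemma Rp_hi: "k + 1 < r \<Longrightarrow> Rp r {k, k + 1} = {}"
  by (auto simp: Rp_def)

lemma powi_int: "(-1::complex) powi (int n) = (-1)^n"
  by (simp add: power_int_of_nat)

lemma f0_basis:
  assumes i: "i < 2*r - 1" and j: "j < 2*r - 1"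
  shows "f0 r (vbas r i) (vbas r j) = epsb r i j"
proof -
  have ci: "vbas r i \<in> Ceven r" and cj: "vbas r j \<in> Ceven r" using vbas_Ceven i j by auto
  then have f0e: "f0 r (vbas r i) (vbas r j) = (-1)^(Bf r (vbas r i) (vbas r j))" by (simp add: f0_def)
  show ?thesis
  proof (cases "i < r")
    case True
    have B0: "Bf r (vbas r i) (vbas r j) = 0" using True by (simp add: vbas_lo up_lo Bf_def)
    have "epsb r i j = 1"
    proof (cases "i = j")
      case True
      then show ?thesis using \<open>i < r\<close> by (simp add: epsb_def vbas_lo wt_pair)
    next
      case False
      show ?thesis
      proof (cases "i < j")
        case True then show ?thesis using False by (simp add: epsb_def)
      next
        case False2: False
        then have "j < r" using \<open>i < r\<close> by simp
        then have "vmul (vbas r i) (vbas r j) = {}" using \<open>i < r\<close> False by (auto simp: vbas_lo vmul_def)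
        then show ?thesis using False False2 by (simp add: epsb_def wt_def wl_def wr_def)
      qed
    qed
    then show ?thesis using f0e B0 by simp
  next
    case False
    define k where "k = i - r"
    have k: "k + 1 < r" "i = r + k" using False i by (auto simp: k_def)
    have vi: "vbas r i = {k, k + 1}" using False by (simp add: vbas_hi k_def)
    show ?thesis
    proof (cases "j < r")
      case True
      have ui: "up r (vbas r i) = {k, k+1}" using up_hi[OF k(1)] vi by simp
      have uj: "up r (vbas r j) = {}" "Rp r (vbas r j) = {j}" using True up_lo Rp_lo vbas_lo by auto
      have B: "Bf r (vbas r i) (vbas r j) = card ({k, k+1} \<inter> {j})"
        unfolding Bf_def ui uj by simp
      have "vmul (vbas r i) (vbas r j) = {k, k+1} \<inter> {j}"
        unfolding vi using True k(1) by (auto simp: vbas_lo vmul_def)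
      moreover have "wt r ({k, k+1} \<inter> {j}) = int (card ({k, k+1} \<inter> {j}))"
        using k by (intro wt_left) auto
      ultimately have "epsb r i j = (-1)^(card ({k, k+1} \<inter> {j}))"
        using True k(2) by (simp add: epsb_def powi_int)
      then show ?thesis using f0e B by simp
    next
      case False2: False
      define l where "l = j - r"
      have l: "l + 1 < r" "j = r + l" using False2 j by (auto simp: l_def)
      have vj: "vbas r j = {l, l + 1}" using False2 by (simp add: vbas_hi l_def)
      let ?S = "({k, k+1} \<times> {l, l+1}) \<inter> {(p::nat, q). q < p}"
      have ui: "up r (vbas r i) = {k, k+1}" using up_hi[OF k(1)] vi by simp
      have uj: "up r (vbas r j) = {l, l+1}" "Rp r (vbas r j) = {}" using up_hi[OF l(1)] Rp_hi[OF l(1)] vj by auto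
      have B: "Bf r (vbas r i) (vbas r j) = card ?S"
        unfolding Bf_def ui uj by simp
      consider "k = l" | "k < l" | "k = l + 1" | "k > l + 1" by linarith
      then show ?thesis
      proof cases
        case 1
        then have "?S = {(k+1, k)}" by auto
        moreover have "wt r (vbas r i) = 2" unfolding vi using k(1) by (subst wt_left) auto
        moreover have "i = j" using 1 k(2) l(2) by simp
        ultimately show ?thesis using f0e B by (simp add: epsb_def vi)
      next
        case 2
        then have "?S = {}" by auto
        moreover have "i < j" using 2 k(2) l(2) by simp
        ultimately show ?thesis using f0e B by (simp add: epsb_def)
      next
        case 3
        then have "?S = {(l+1, l), (l+2, l), (l+2, l+1)}" by auto
        moreover have "vmul (vbas r i) (vbas r j) = {l+1}" using 3 by (auto simp: vi vj vmul_def)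
        moreover have "wt r {l+1} = 1" using l by (subst wt_left) auto
        moreover have "j < i" using 3 k(2) l(2) by simp
        ultimately show ?thesis using f0e B by (simp add: epsb_def)
      next
        case 4
        then have "?S = {k, k+1} \<times> {l, l+1}" by auto
        moreover have "card ({k, k+1} \<times> {l, l+1}) = 4" using 4 by (simp add: card_cartesian_product)
        moreover have "vmul (vbas r i) (vbas r j) = {}" using 4 by (auto simp: vi vj vmul_def)
        moreover have "j < i" using 4 k(2) l(2) by simp
        ultimately show ?thesis using f0e B by (simp add: epsb_def wt_def wl_def wr_def)
      qed
    qed
  qed
qed

lemma Peps_f0: "Peps r (f0 r)"
  unfolding Peps_def
  using f0_vadd1 f0_vadd2 f0_basis by (auto simp: f0_def)

lemma eps_f0: "r \<ge> 1 \<Longrightarrow> eps r = f0 r"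
  unfolding eps_Peps
  by (rule the_equality[of "Peps r" "f0 r", OF Peps_f0]) (use Peps_unique Peps_f0 in blast)


definition cst :: "nat set set \<Rightarrow> nat set \<Rightarrow> nat set set" where
  "cst H \<beta> = vadd \<beta> ` H"

lemma inj_vadd: "inj_on (vadd \<beta>) A"
  by (metis inj_onI vadd_cancel)

lemma coset_eq:
  assumes Hc: "\<forall>h\<in>H. \<forall>h'\<in>H. vadd h h' \<in> H" and y: "y \<in> cst H \<beta>"
  shows "cst H y = cst H \<beta>"
proof -
  obtain h0 where h0: "h0 \<in> H" "y = vadd \<beta> h0" using y by (auto simp: cst_def)
  show ?thesis
  proof
    show "cst H y \<subseteq> cst H \<beta>"
    proof
      fix z assume "z \<in> cst H y"
      then obtain h where "h \<in> H" "z = vadd y h" by (auto simp: cst_def)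
      then have "z = vadd \<beta> (vadd h0 h)" "vadd h0 h \<in> H" using h0 Hc by (auto simp: vadd_assoc)
      then show "z \<in> cst H \<beta>" by (auto simp: cst_def)
    qed
    show "cst H \<beta> \<subseteq> cst H y"
    proof
      fix z assume "z \<in> cst H \<beta>"
      then obtain h where "h \<in> H" "z = vadd \<beta> h" by (auto simp: cst_def)
      then have "z = vadd y (vadd h0 h)" "vadd h0 h \<in> H" using h0 Hc
        by (auto simp: vadd_assoc vadd_cancel)
      then show "z \<in> cst H y" by (auto simp: cst_def)
    qed
  qed
qed

lemma coset_count:
  assumes finX: "finite X" and finH: "finite H" and H0: "{} \<in> H"
    and Hc: "\<forall>h\<in>H. \<forall>h'\<in>H. vadd h h' \<in> H"
    and XH: "\<forall>x\<in>X. \<forall>h\<in>H. vadd x h \<in> X"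
  shows "card X = card H * card (cst H ` X)"
proof -
  have U: "\<Union> (cst H ` X) = X"
  proof
    show "\<Union> (cst H ` X) \<subseteq> X" using XH by (auto simp: cst_def)
    show "X \<subseteq> \<Union> (cst H ` X)"
    proof
      fix x assume "x \<in> X"
      moreover have "x \<in> cst H x" using H0 by (force simp: cst_def)
      ultimately show "x \<in> \<Union> (cst H ` X)" by blast
    qed
  qed
  have c1: "\<forall>c\<in>cst H ` X. card c = card H"
    unfolding cst_def using inj_vadd card_image by blast
  have c2: "\<forall>c1\<in>cst H ` X. \<forall>c2\<in>cst H ` X. c1 \<noteq> c2 \<longrightarrow> c1 \<inter> c2 = {}"
    using coset_eq[OF Hc] by blast
  have "card H * card (cst H ` X) = card (\<Union> (cst H ` X))"
    by (rule card_partition) (use c1 c2 U finX in auto)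
  then show ?thesis using U by simp
qed

lemma even_wt_iff: "even (wt r a) \<longleftrightarrow> even (wl r a + wr r a)"
  unfolding wt_def by (metis even_diff even_of_nat of_nat_add)

lemma wt_vadd_even:
  assumes "finite x" "finite y"
  shows "even (wt r (vadd x y)) \<longleftrightarrow> (even (wt r x) \<longleftrightarrow> even (wt r y))"
proof -
  have a: "even (wl r (vadd x y) + wl r x + wl r y)"
    unfolding wl_def vadd_Int by (rule even_card_vadd) (use assms in auto)
  have b: "even (wr r (vadd x y) + wr r x + wr r y)"
    unfolding wr_def vadd_Int by (rule even_card_vadd) (use assms in auto)
  show ?thesis unfolding even_wt_iff using a b by (metis even_add)
qed

lemma vmul_vadd: "vmul (vadd b b') a = vadd (vmul b a) (vmul b' a)"
  by (auto simp: vmul_def vadd_def)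

lemma CG_sub: "CG r G \<subseteq> Pow {..<2*r}"
  by (auto simp: CG_def perp_def Z2_def)

lemma finite_CG: "finite (CG r G)"
  using CG_sub finite_subset by (metis finite_Pow_iff finite_lessThan)

lemma CG_vadd:
  assumes b: "b \<in> CG r G" and b': "b' \<in> CG r G" shows "vadd b b' \<in> CG r G"
proof -
  have sb: "b \<subseteq> {..<2*r}" "b' \<subseteq> {..<2*r}" using b b' CG_sub[of r G] by auto
  then have fb: "finite b" "finite b'" using finite_subset by auto
  have h1: "\<forall>a\<in>DG r G. even (wt r (vmul b a))" and h2: "\<forall>a\<in>DG r G. even (wt r (vmul b' a))"
    using b b' by (auto simp: CG_def perp_def)
  have "vadd b b' \<subseteq> {..<2*r}" using sb by (auto simp: vadd_def)
  moreover have "\<forall>a\<in>DG r G. even (wt r (vmul (vadd b b') a))"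
  proof
    fix a assume a: "a \<in> DG r G"
    have "finite (vmul b a)" "finite (vmul b' a)" using fb by (auto simp: vmul_def)
    then show "even (wt r (vmul (vadd b b') a))" unfolding vmul_vadd
      using wt_vadd_even h1 h2 a by blast
  qed
  ultimately show ?thesis by (simp add: CG_def perp_def Z2_def)
qed

lemma CG_empty: "{} \<in> CG r G"
  by (auto simp: CG_def perp_def Z2_def vmul_def wt_def wl_def wr_def)

lemma Delta_ones: "Delta r (ones r) = {..<2*r}"
proof -
  have "x \<in> Delta r {..<r}" if "x < 2*r" for x
  proof (cases "x < r")
    case True then show ?thesis by (auto simp: Delta_def)
  next
    case False
    then have "x = (x - r) + r" "x - r < r" using that by auto
    then show ?thesis unfolding Delta_def by blast
  qed
  then show ?thesis by (auto simp: Delta_def ones_def)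
qed

lemma CG_Ceven:
  assumes "ones r \<in> G" shows "CG r G \<subseteq> Ceven r"
proof
  fix b assume b: "b \<in> CG r G"
  have "Delta r (ones r) \<in> DG r G" using assms by (simp add: DG_def)
  then have "even (wt r (vmul b {..<2*r}))" using b Delta_ones by (auto simp: CG_def perp_def)
  moreover have "vmul b {..<2*r} = b" using b CG_sub by (auto simp: vmul_def)
  ultimately show "b \<in> Ceven r" using b CG_sub[of r G] by (auto simp: Ceven_def Z2_def)
qed

lemma Delta_lo: "g \<subseteq> {..<r} \<Longrightarrow> Delta r g \<inter> {..<r} = g"
  by (auto simp: Delta_def)
lemma Delta_hi: "g \<subseteq> {..<r} \<Longrightarrow> Delta r g \<inter> {r..<2*r} = (\<lambda>i. i + r) ` g"
  by (auto simp: Delta_def)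
lemma Delta_sub: "g \<subseteq> {..<r} \<Longrightarrow> Delta r g \<subseteq> {..<2*r}"
  by (auto simp: Delta_def)

lemma card_Delta_hi: "g \<subseteq> {..<r} \<Longrightarrow> card (Delta r g \<inter> {r..<2*r}) = card g"
  by (simp add: Delta_hi card_image inj_on_def)

lemma wt_Delta: "g \<subseteq> {..<r} \<Longrightarrow> wt r (Delta r g) = 0"
  by (simp add: wt_def wl_def wr_def Delta_lo card_Delta_hi)

lemma wl_Delta: "g \<subseteq> {..<r} \<Longrightarrow> wl r (Delta r g) = card g"
  by (simp add: wl_def Delta_lo)

lemma vmul_Delta: "g \<subseteq> {..<r} \<Longrightarrow> h \<subseteq> {..<r} \<Longrightarrow> vmul (Delta r g) (Delta r h) = Delta r (g \<inter> h)"
  by (auto simp: vmul_def Delta_def)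

lemma vadd_Delta: "g \<subseteq> {..<r} \<Longrightarrow> h \<subseteq> {..<r} \<Longrightarrow> vadd (Delta r g) (Delta r h) = Delta r (vadd g h)"
  by (auto simp: vadd_def Delta_def)

lemma Delta_subset_iff: "g \<subseteq> {..<r} \<Longrightarrow> h \<subseteq> {..<r} \<Longrightarrow> Delta r g \<subseteq> Delta r h \<longleftrightarrow> g \<subseteq> h"
  by (metis Delta_lo Int_mono order_refl Delta_def Un_mono image_mono)

lemma inj_Delta: "inj_on (Delta r) (Pow {..<r})"
  by (metis Delta_lo PowD inj_onI)

lemma Delta_CG:
  assumes G: "G \<subseteq> Z2 r" and g: "g \<subseteq> {..<r}"
  shows "Delta r g \<in> CG r G"
proof -
  have "\<forall>a\<in>DG r G. even (wt r (vmul (Delta r g) a))"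
  proof
    fix a assume "a \<in> DG r G"
    then obtain h where h: "h \<in> G" "a = Delta r h" by (auto simp: DG_def)
    then have hs: "h \<subseteq> {..<r}" using G by (auto simp: Z2_def)
    show "even (wt r (vmul (Delta r g) a))"
    proof -
      have "g \<inter> h \<subseteq> {..<r}" using g by auto
      then have "wt r (Delta r (g \<inter> h)) = 0" by (rule wt_Delta)
      then show ?thesis by (simp add: h(2) vmul_Delta[OF g hs])
    qed
  qed
  then show ?thesis using Delta_sub[OF g] by (simp add: CG_def perp_def Z2_def)
qed

lemma Deltad_eq:
  assumes h: "h \<subseteq> {..<r}"
  shows "Deltad r (Delta r h) = Delta r ` Pow h"
proof
  show "Deltad r (Delta r h) \<subseteq> Delta r ` Pow h"
  proof
    fix x assume "x \<in> Deltad r (Delta r h)"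
    then obtain g where g: "g \<subseteq> {..<r}" "x = Delta r g" "vmul (Delta r h) x = x"
      by (auto simp: Deltad_def Z2sub_def Z2_def)
    then have "Delta r g \<subseteq> Delta r h" by (auto simp: vmul_def)
    then have "g \<subseteq> h" using Delta_subset_iff[OF g(1) h] by simp
    then show "x \<in> Delta r ` Pow h" using g by auto
  qed
  show "Delta r ` Pow h \<subseteq> Deltad r (Delta r h)"
  proof
    fix x assume "x \<in> Delta r ` Pow h"
    then obtain g where g: "g \<subseteq> h" "x = Delta r g" by auto
    then have gs: "g \<subseteq> {..<r}" using h by auto
    have "Delta r g \<subseteq> Delta r h" using Delta_subset_iff[OF gs h] g by simp
    then show "x \<in> Deltad r (Delta r h)" using g gs Delta_sub[OF gs]
      by (auto simp: Deltad_def Z2sub_def Z2_def vmul_def)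
  qed
qed

lemma card_Deltad:
  assumes h: "h \<subseteq> {..<r}"
  shows "card (Deltad r (Delta r h)) = 2 ^ card h"
proof -
  have "inj_on (Delta r) (Pow h)" using inj_Delta h by (meson Pow_mono inj_on_subset)
  moreover have "finite h" using h finite_subset by blast
  ultimately show ?thesis unfolding Deltad_eq[OF h] by (simp add: card_image card_Pow)
qed

lemma up_Delta: "g \<subseteq> {..<r} \<Longrightarrow> up r (Delta r g) = {}"
proof -
  assume g: "g \<subseteq> {..<r}"
  have "Lp r (Delta r g) = g" using Delta_lo[OF g] by (simp add: Lp_def)
  moreover have "Rp r (Delta r g) = g" using g by (auto simp: Rp_def Delta_def)
  ultimately show ?thesis by (simp add: up_def)
qed

lemma f0_Delta: "g \<subseteq> {..<r} \<Longrightarrow> f0 r (Delta r g) b = 1"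
  by (simp add: f0_def Bf_def up_Delta)

lemma f0_emptyR: "f0 r a {} = 1"
proof -
  have "up r {} = {}" "Rp r {} = {}" by (auto simp: up_def Lp_def Rp_def vadd_def)
  then show ?thesis by (simp add: f0_def Bf_def)
qed

lemma f0_sq: "f0 r a b * f0 r a b = 1"
  by (simp add: f0_def power_mult_distrib[symmetric] power_mult[symmetric])


interpretation cs: vector_space "cscale :: complex \<Rightarrow> ('a \<Rightarrow> complex) \<Rightarrow> ('a \<Rightarrow> complex)"
  by unfold_locales (auto simp: cscale_def fun_eq_iff algebra_simps)

lemma sum_fun_apply: "(sum f A) x = (\<Sum>a\<in>A. f a x)"
  by (induction A rule: infinite_finite_induct) auto

lemma cscale_zero[simp]: "cscale 0 f = 0"
  by (simp add: cscale_def fun_eq_iff)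

lemma lin_sum:
  assumes add: "\<And>f g. L (f+g) = L f + L g" and sc: "\<And>c f. L (cscale c f) = c * L f"
  shows "L (\<Sum>v\<in>T. cscale (u v) v) = (\<Sum>v\<in>T. u v * L v)"
proof (induction T rule: infinite_finite_induct)
  case (infinite A)
  have "L 0 = L 0 + L 0" using add[of 0 0] by simp
  then have "L 0 = 0" by simp
  then show ?case using infinite by (metis sum.infinite)
next
  case empty
  have "L 0 = L 0 + L 0" using add[of 0 0] by simp
  then show ?case by (simp add: zero_fun_def)
next
  case (insert x F)
  then show ?case by (simp only: sum.insert[OF insert(1,2)] add sc insert(3))
qed

lemma dim_extend:
  fixes W :: "('a \<Rightarrow> complex) set" and b :: "'i \<Rightarrow> ('a \<Rightarrow> complex)"
    and L :: "'i \<Rightarrow> ('a \<Rightarrow> complex) \<Rightarrow> complex"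
  assumes finI: "finite I"
    and finF: "finite Fin" and Wsub: "W \<subseteq> cs.span Fin"
    and add: "\<And>i f g. i \<in> I \<Longrightarrow> L i (f+g) = L i f + L i g"
    and sc: "\<And>i c f. i \<in> I \<Longrightarrow> L i (cscale c f) = c * L i f"
    and van: "\<And>i w. i \<in> I \<Longrightarrow> w \<in> cs.span W \<Longrightarrow> L i w = 0"
    and diag: "\<And>i j. i \<in> I \<Longrightarrow> j \<in> I \<Longrightarrow> L i (b j) = (if i = j then 1 else 0)"
  shows "cs.dim (b ` I \<union> W) = card I + cs.dim W"
proof -
  obtain C where C: "C \<subseteq> cs.span W" "cs.independent C" "cs.span W \<subseteq> cs.span C" "card C = cs.dim (cs.span W)"
    using cs.basis_exists by blast
  have "cs.span W \<subseteq> cs.span Fin" using cs.span_mono[OF Wsub] by (simp add: cs.span_span)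
  then have "C \<subseteq> cs.span Fin" using C(1) by blast
  then have finC: "finite C" using cs.independent_span_bound[OF finF C(2)] by blast
  have spC: "cs.span C = cs.span W"
    by (intro subset_antisym cs.span_minimal[OF C(1) cs.subspace_span] C(3))
  have inj: "inj_on b I"
  proof (rule inj_onI)
    fix i j assume "i \<in> I" "j \<in> I" "b i = b j"
    then have "L i (b i) = L i (b j)" by simp
    then show "i = j" using diag \<open>i\<in>I\<close> \<open>j\<in>I\<close> by (auto split: if_splits)
  qed
  have disj: "b ` I \<inter> C = {}"
  proof safe
    fix i assume "i \<in> I" "b i \<in> C"
    then have "L i (b i) = 0" using van C(1) by blast
    then show "b i \<in> {}" using diag[of i i] \<open>i\<in>I\<close> by simp
  qed
  have ind: "cs.independent (b ` I \<union> C)"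
  proof (rule cs.independent_if_scalars_zero)
    show "finite (b ` I \<union> C)" using finI finC by simp
  next
    fix c v assume z: "(\<Sum>v\<in>b ` I \<union> C. cscale (c v) v) = 0" and v: "v \<in> b ` I \<union> C"
    define S1 where "S1 = (\<Sum>v\<in>b ` I. cscale (c v) v)"
    define S2 where "S2 = (\<Sum>v\<in>C. cscale (c v) v)"
    have split: "S1 + S2 = 0"
      using z finI finC disj unfolding S1_def S2_def by (simp add: sum.union_disjoint)
    have cb: "c (b i) = 0" if i: "i \<in> I" for i
    proof -
      have "S2 \<in> cs.span C" unfolding S2_def
        by (intro cs.span_sum cs.span_scale cs.span_base)
      then have L2: "L i S2 = 0" using van[OF i] spC by simp
      have "L i S1 = (\<Sum>v\<in>b ` I. c v * L i v)"
        unfolding S1_def by (rule lin_sum[OF add[OF i] sc[OF i]])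
      also have "\<dots> = (\<Sum>j\<in>I. c (b j) * L i (b j))"
        by (rule sum.reindex[OF inj, unfolded comp_def])
      also have "\<dots> = (\<Sum>j\<in>I. if j = i then c (b i) else 0)"
      proof (rule sum.cong)
        fix j assume j: "j \<in> I"
        show "c (b j) * L i (b j) = (if j = i then c (b i) else 0)"
          using diag[OF i j] by (cases "j = i") simp_all
      qed simp
      also have "\<dots> = c (b i)" using i finI by simp
      finally have L1: "L i S1 = c (b i)" .
      have L0: "L i 0 = 0"
      proof -
        have "L i 0 = L i 0 + L i 0" using add[OF i, of 0 0] by simp
        then show ?thesis by simp
      qed
      have "L i (S1 + S2) = L i S1 + L i S2" by (rule add[OF i])
      then show ?thesis using L0 L1 L2 split by simp
    qed
    have "S1 = (\<Sum>v\<in>b ` I. 0)"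
      unfolding S1_def
    proof (rule sum.cong)
      fix v assume "v \<in> b ` I"
      then obtain i where "i \<in> I" "v = b i" by blast
      then show "cscale (c v) v = 0" using cb by (simp add: cscale_zero)
    qed simp
    then have "S1 = 0" by simp
    then have zc: "S2 = 0" using split by simp
    show "c v = 0"
    proof (cases "v \<in> C")
      case True
      then show ?thesis using cs.independentD[OF C(2) finC _ zc[unfolded S2_def]] by blast
    next
      case False
      then show ?thesis using v cb by auto
    qed
  qed
  have "cs.span (b ` I \<union> W) = cs.span (b ` I \<union> C)"
  proof (rule cs.span_eq[THEN iffD2], rule conjI)
    show "b ` I \<union> W \<subseteq> cs.span (b ` I \<union> C)"
      using spC cs.span_superset cs.span_mono[of C "b ` I \<union> C"] cs.span_mono[of "b ` I" "b ` I \<union> C"]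
      by blast
    show "b ` I \<union> C \<subseteq> cs.span (b ` I \<union> W)"
      using C(1) cs.span_superset cs.span_mono[of W "b ` I \<union> W"] cs.span_span
      by (smt (verit) Un_iff cs.span_superset subset_iff)
  qed
  then have "cs.dim (b ` I \<union> W) = card (b ` I \<union> C)"
    using cs.dim_eq_card[OF _ ind] by simp
  also have "\<dots> = card I + card C"
    using finI finC disj by (simp add: card_Un_disjoint card_image[OF inj])
  finally show ?thesis using C(4) by simp
qed


definition dl :: "nat set \<times> nat set \<Rightarrow> (nat set \<times> nat set \<Rightarrow> complex)" where
  "dl p = (\<lambda>q. if q = p then 1 else 0)"

lemma vadd_eq_iff: "vadd \<alpha> \<gamma> = \<beta> \<longleftrightarrow> \<alpha> = vadd \<beta> \<gamma>"
  by (metis vadd_assoc vadd_comm vadd_cancel)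

lemma twmul_ebas:
  assumes g: "\<gamma> \<in> CG r G"
  shows "twmul r G x (ebas \<gamma>) \<beta> = (if vadd \<beta> \<gamma> \<in> CG r G then eps r (vadd \<beta> \<gamma>) \<gamma> * x (vadd \<beta> \<gamma>) else 0)"
proof -
  have inner: "(\<Sum>\<alpha>'\<in>CG r G. if vadd \<alpha> \<alpha>' = \<beta> then eps r \<alpha> \<alpha>' * x \<alpha> * ebas \<gamma> \<alpha>' else 0)
      = (if \<alpha> = vadd \<beta> \<gamma> then eps r \<alpha> \<gamma> * x \<alpha> else 0)" for \<alpha>
  proof -
    have "(\<Sum>\<alpha>'\<in>CG r G. if vadd \<alpha> \<alpha>' = \<beta> then eps r \<alpha> \<alpha>' * x \<alpha> * ebas \<gamma> \<alpha>' else 0)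
        = (\<Sum>\<alpha>'\<in>CG r G. if \<alpha>' = \<gamma> then (if vadd \<alpha> \<gamma> = \<beta> then eps r \<alpha> \<gamma> * x \<alpha> else 0) else 0)"
      by (rule sum.cong) (auto simp: ebas_def)
    also have "\<dots> = (if vadd \<alpha> \<gamma> = \<beta> then eps r \<alpha> \<gamma> * x \<alpha> else 0)"
      using g finite_CG by simp
    finally show ?thesis by (simp add: vadd_eq_iff)
  qed
  have "twmul r G x (ebas \<gamma>) \<beta> = (\<Sum>\<alpha>\<in>CG r G. if \<alpha> = vadd \<beta> \<gamma> then eps r \<alpha> \<gamma> * x \<alpha> else 0)"
    unfolding twmul_def using inner by simp
  also have "\<dots> = (if vadd \<beta> \<gamma> \<in> CG r G then eps r (vadd \<beta> \<gamma>) \<gamma> * x (vadd \<beta> \<gamma>) else 0)"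
    using finite_CG by (simp add: sum.delta')
  finally show ?thesis .
qed

lemma supp_span:
  assumes P: "finite P" and f: "\<forall>p. f p \<noteq> 0 \<longrightarrow> p \<in> P"
  shows "f \<in> cs.span (dl ` P)"
proof -
  have "f = (\<Sum>p\<in>P. cscale (f p) (dl p))"
  proof
    fix q
    have "(\<Sum>p\<in>P. cscale (f p) (dl p)) q = (\<Sum>p\<in>P. if p = q then f q else 0)"
      unfolding sum_fun_apply by (rule sum.cong) (auto simp: cscale_def dl_def)
    also have "\<dots> = f q"
    proof -
      have "q \<notin> P \<Longrightarrow> f q = 0" using f by blast
      then show ?thesis using P by (simp add: sum.delta)
    qed
    finally show "f q = (\<Sum>p\<in>P. cscale (f p) (dl p)) q" by simp
  qed
  also have "\<dots> \<in> cs.span (dl ` P)"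
    by (intro cs.span_sum cs.span_scale cs.span_base) auto
  finally show ?thesis .
qed

lemma dperp_mul: "a \<subseteq> {..<2*r} \<Longrightarrow> vmul (dperp r d) a = a - d"
  by (auto simp: dperp_def vmul_def vadd_def ones_def)

definition Fset :: "nat \<Rightarrow> nat set set \<Rightarrow> nat set \<times> nat set \<Rightarrow> nat set set" where
  "Fset r G \<mu> = {\<alpha> \<in> CG r G. fst \<mu> \<in> DG r G \<and> (fst \<mu>, vmul (dperp r (fst \<mu>)) \<alpha>) = \<mu>}"

context
  fixes r :: nat and G :: "nat set set"
  assumes r: "r \<ge> 1" and sg: "is_subgroup_Z2 r G" and one: "ones r \<in> G"
begin

lemma G_sub: "G \<subseteq> Z2 r" using sg by (simp add: is_subgroup_Z2_def)

lemma eps_eq: "eps r = f0 r" using eps_f0 r by simp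

lemma finite_DG: "finite (DG r G)"
proof -
  have "finite G" using G_sub by (metis Z2_def finite_Pow_iff finite_lessThan finite_subset)
  then show ?thesis by (simp add: DG_def)
qed

lemma DG_obtain:
  assumes "d \<in> DG r G"
  obtains h where "h \<in> G" "h \<subseteq> {..<r}" "d = Delta r h"
  using assms G_sub by (auto simp: DG_def Z2_def)

lemma H_props:
  assumes d: "d \<in> DG r G"
  shows "Deltad r d \<subseteq> CG r G" "{} \<in> Deltad r d"
    "\<forall>h\<in>Deltad r d. \<forall>h'\<in>Deltad r d. vadd h h' \<in> Deltad r d"
    "\<forall>h\<in>Deltad r d. h \<subseteq> d"
    "\<forall>h\<in>Deltad r d. \<forall>h'\<in>Deltad r d. f0 r h h' = 1"
    "card (Deltad r d) = 2 ^ wl r d"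
    "finite (Deltad r d)"
proof -
  obtain h0 where h0: "h0 \<in> G" "h0 \<subseteq> {..<r}" "d = Delta r h0" using DG_obtain[OF d] by blast
  have H: "Deltad r d = Delta r ` Pow h0" using Deltad_eq[OF h0(2)] h0(3) by simp
  show "Deltad r d \<subseteq> CG r G" unfolding H using Delta_CG[OF G_sub] h0(2) by auto
  show "{} \<in> Deltad r d" unfolding H by (rule image_eqI[of _ _ "{}"]) (auto simp: Delta_def)
  show "\<forall>h\<in>Deltad r d. \<forall>h'\<in>Deltad r d. vadd h h' \<in> Deltad r d"
  proof (intro ballI)
    fix h h' assume "h \<in> Deltad r d" "h' \<in> Deltad r d"
    then obtain g g' where "g \<subseteq> h0" "g' \<subseteq> h0" "h = Delta r g" "h' = Delta r g'" unfolding H by auto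
    moreover have "vadd g g' \<subseteq> h0" using calculation by (auto simp: vadd_def)
    ultimately show "vadd h h' \<in> Deltad r d" unfolding H using h0(2) vadd_Delta[of g r g']
      by (metis PowI image_eqI subset_trans)
  qed
  show "\<forall>h\<in>Deltad r d. h \<subseteq> d"
  proof
    fix h assume "h \<in> Deltad r d"
    then obtain g where "g \<subseteq> h0" "h = Delta r g" unfolding H by auto
    then show "h \<subseteq> d" unfolding h0(3) by (auto simp: Delta_def)
  qed
  show "\<forall>h\<in>Deltad r d. \<forall>h'\<in>Deltad r d. f0 r h h' = 1"
    unfolding H using h0(2) f0_Delta by (metis PowD image_iff subset_trans)
  show "card (Deltad r d) = 2 ^ wl r d"
    using card_Deltad[OF h0(2)] wl_Delta[OF h0(2)] h0(3) by simp
  show "finite (Deltad r d)" unfolding H using h0(2) finite_subset by auto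
qed

lemma CG_Ce: "\<beta> \<in> CG r G \<Longrightarrow> \<beta> \<in> Ceven r"
  using CG_Ceven[OF one] by auto

end


lemma ebas_app: "ebas a b = (if b = a then 1 else 0)" by (simp add: ebas_def)

lemma vadd_vadd_same: "vadd (vadd a x) (vadd a y) = vadd x y"
  by (auto simp: vadd_def)

lemma coset_facts:
  assumes H0: "{} \<in> H" and Hc: "\<forall>h\<in>H. \<forall>h'\<in>H. vadd h h' \<in> H"
    and FH: "\<forall>x\<in>F. \<forall>h\<in>H. vadd x h \<in> F" and a: "\<alpha> \<in> F" and K: "K = cst H \<alpha>"
  shows "(SOME a. a \<in> K) \<in> K" "K \<subseteq> F" "\<forall>\<beta>\<in>K. vadd \<beta> (SOME a. a \<in> K) \<in> H"
    "\<forall>\<beta>\<in>K. \<forall>h\<in>H. vadd \<beta> h \<in> K" "K = cst H (SOME a. a \<in> K)"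
proof -
  have "vadd \<alpha> {} = \<alpha>" by simp
  then have aK: "\<alpha> \<in> K" unfolding K cst_def using H0 by (metis image_eqI)
  then show rK: "(SOME a. a \<in> K) \<in> K" by (rule someI)
  then obtain h2 where h2: "h2 \<in> H" "(SOME a. a \<in> K) = vadd \<alpha> h2" unfolding K cst_def by blast
  show "K \<subseteq> F" unfolding K cst_def using FH a by blast
  show "\<forall>\<beta>\<in>K. vadd \<beta> (SOME a. a \<in> K) \<in> H"
  proof
    fix \<beta> assume "\<beta> \<in> K"
    then obtain h1 where "h1 \<in> H" "\<beta> = vadd \<alpha> h1" unfolding K cst_def by blast
    then show "vadd \<beta> (SOME a. a \<in> K) \<in> H" using h2 Hc by (simp add: vadd_vadd_same)
  qed
  show "\<forall>\<beta>\<in>K. \<forall>h\<in>H. vadd \<beta> h \<in> K"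
  proof (intro ballI)
    fix \<beta> h assume "\<beta> \<in> K" "h \<in> H"
    then obtain h1 where h1: "h1 \<in> H" "\<beta> = vadd \<alpha> h1" unfolding K cst_def by blast
    then have "vadd \<beta> h = vadd \<alpha> (vadd h1 h)" by (simp add: vadd_assoc)
    moreover have "vadd h1 h \<in> H" using Hc h1(1) \<open>h \<in> H\<close> by blast
    ultimately show "vadd \<beta> h \<in> K" unfolding K cst_def by blast
  qed
  have "cst H (SOME a. a \<in> K) = cst H \<alpha>"
    by (rule coset_eq[OF Hc]) (use rK K in simp)
  then show "K = cst H (SOME a. a \<in> K)" using K by simp
qed


context
  fixes r :: nat and G :: "nat set set"
  assumes r: "r \<ge> 1" and sg: "is_subgroup_Z2 r G" and one: "ones r \<in> G"
begin

lemma dimSG_eq: "dimSG r G \<mu> = card (cst (Deltad r (fst \<mu>)) ` Fset r G \<mu>)"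
proof -
  obtain d0 c where mu: "\<mu> = (d0, c)" by (cases \<mu>)
  define H where "H = Deltad r d0"
  define F where "F = Fset r G \<mu>"
  define I where "I = cst H ` F"
  define rep where "rep K = (SOME a. a \<in> K)" for K :: "nat set set"
  define bb where "bb K = dl (d0, rep K)" for K
  define LL where "LL K f = (\<Sum>\<beta>\<in>K. f0 r (rep K) (vadd \<beta> (rep K)) * f (d0, \<beta>))"
    for K and f :: "nat set \<times> nat set \<Rightarrow> complex"
  note HP = H_props[OF r sg one]
  note eps_eq = eps_eq[OF r sg one]
  note CG_Ce = CG_Ce[OF r sg one]
  have F_alt: "F = {\<alpha> \<in> CG r G. d0 \<in> DG r G \<and> vmul (dperp r d0) \<alpha> = c}"
    by (auto simp: F_def Fset_def mu)
  have FCG: "F \<subseteq> CG r G" using F_alt by auto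
  have finF: "finite F" using FCG finite_CG finite_subset by blast
  have Fd: "\<alpha> \<in> F \<Longrightarrow> d0 \<in> DG r G" for \<alpha> using F_alt by auto
  have FH: "vadd \<alpha> h \<in> F" if a: "\<alpha> \<in> F" and h: "h \<in> H" for \<alpha> h
  proof -
    have d0: "d0 \<in> DG r G" using Fd a .
    have hC: "h \<in> CG r G" and hd: "h \<subseteq> d0" using HP(1,4)[OF d0] h by (auto simp: H_def)
    have aC: "\<alpha> \<in> CG r G" using a FCG by auto
    have "vadd \<alpha> h \<in> CG r G" using CG_vadd aC hC by blast
    moreover have "vmul (dperp r d0) (vadd \<alpha> h) = vmul (dperp r d0) \<alpha>"
    proof -
      have "h \<subseteq> {..<2*r}" using hC CG_sub[of r G] by auto
      then show ?thesis using hd by (auto simp: vmul_def vadd_def dperp_def ones_def)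
    qed
    ultimately show ?thesis using a d0 F_alt by auto
  qed
  have Kfacts: "d0 \<in> DG r G \<and> rep K \<in> K \<and> K \<subseteq> F \<and> (\<forall>\<beta>\<in>K. vadd \<beta> (rep K) \<in> H)
      \<and> (\<forall>\<beta>\<in>K. \<forall>h\<in>H. vadd \<beta> h \<in> K) \<and> cst H (rep K) = K" if K: "K \<in> I" for K
  proof -
    obtain \<alpha> where a: "\<alpha> \<in> F" "K = cst H \<alpha>" using K I_def by auto
    have d0: "d0 \<in> DG r G" using Fd a(1) .
    have H0: "{} \<in> H" and Hc: "\<forall>h\<in>H. \<forall>h'\<in>H. vadd h h' \<in> H" using HP(2,3)[OF d0] by (auto simp: H_def)
    have FH': "\<forall>x\<in>F. \<forall>h\<in>H. vadd x h \<in> F" using FH by blast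
    note cf = coset_facts[OF H0 Hc FH' a(1) a(2)]
    have rr: "rep K = (SOME a. a \<in> K)" by (simp add: rep_def)
    show ?thesis unfolding rr using d0 cf(1) cf(2) cf(3) cf(4) cf(5)[symmetric] by (intro conjI)
  qed
  have finI: "finite I" using finF I_def by simp
  have Kfin: "K \<in> I \<Longrightarrow> finite K" for K using Kfacts finF finite_subset by blast
  have phi: "f0 r (rep K) (vadd (vadd \<beta> \<gamma>) (rep K)) * f0 r \<beta> \<gamma> = f0 r (rep K) (vadd \<beta> (rep K))"
    if K: "K \<in> I" and b: "\<beta> \<in> K" and g: "\<gamma> \<in> H" for K \<beta> \<gamma>
  proof -
    let ?a = "rep K"
    have KF: "d0 \<in> DG r G" "?a \<in> K" "K \<subseteq> F" "vadd \<beta> ?a \<in> H" using Kfacts[OF K] b by auto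
    have HC: "H \<subseteq> CG r G" using HP(1)[OF KF(1)] H_def by simp
    have aC: "?a \<in> Ceven r" "\<beta> \<in> Ceven r" using KF FCG CG_Ce b by auto
    have gC: "\<gamma> \<in> Ceven r" "vadd \<beta> ?a \<in> Ceven r" using HC g KF(4) CG_Ce by auto
    have "vadd (vadd \<beta> \<gamma>) ?a = vadd (vadd \<beta> ?a) \<gamma>" by (auto simp: vadd_def)
    then have "f0 r ?a (vadd (vadd \<beta> \<gamma>) ?a) = f0 r ?a (vadd \<beta> ?a) * f0 r ?a \<gamma>"
      using f0_vadd2[OF gC(2) gC(1) aC(1)] by simp
    moreover have "f0 r ?a \<gamma> * f0 r \<beta> \<gamma> = f0 r (vadd ?a \<beta>) \<gamma>"
      using f0_vadd1[OF aC(1) aC(2) gC(1)] by simp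
    moreover have "f0 r (vadd ?a \<beta>) \<gamma> = 1"
      using HP(5)[OF KF(1)] KF(4) g H_def by (metis vadd_comm)
    ultimately show ?thesis by (simp add: mult.assoc)
  qed
  have van_gen: "LL K g = 0" if K: "K \<in> I" and g: "g \<in> Srelgen r G" for K g
  proof -
    obtain d x \<gamma> where gd: "g = (\<lambda>(d', \<beta>). if d' = d then (twmul r G x (ebas \<gamma>) \<beta> - x \<beta>) else 0)"
      and d: "d \<in> DG r G" and x: "suppIn x (CG r G)" and \<gamma>: "\<gamma> \<in> Deltad r d"
      using g unfolding Srelgen_def by blast
    show ?thesis
    proof (cases "d0 = d")
      case False
      then show ?thesis by (simp add: LL_def gd)
    next
      case True
      have KF: "d0 \<in> DG r G" "K \<subseteq> F" "\<forall>\<beta>\<in>K. \<forall>h\<in>H. vadd \<beta> h \<in> K" using Kfacts[OF K] by auto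
      have gH: "\<gamma> \<in> H" using \<gamma> True H_def by simp
      have gCG: "\<gamma> \<in> CG r G" using HP(1)[OF KF(1)] gH H_def by auto
      let ?phi = "\<lambda>\<beta>. f0 r (rep K) (vadd \<beta> (rep K))"
      have gval: "g (d0, \<beta>) = f0 r (vadd \<beta> \<gamma>) \<gamma> * x (vadd \<beta> \<gamma>) - x \<beta>" if "\<beta> \<in> K" for \<beta>
      proof -
        have "\<beta> \<in> CG r G" using that KF FCG by auto
        then have "vadd \<beta> \<gamma> \<in> CG r G" using CG_vadd gCG by blast
        then show ?thesis using True by (simp add: gd twmul_ebas[OF gCG] eps_eq)
      qed
      have "LL K g = (\<Sum>\<beta>\<in>K. ?phi \<beta> * (f0 r (vadd \<beta> \<gamma>) \<gamma> * x (vadd \<beta> \<gamma>)) - ?phi \<beta> * x \<beta>)"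
        unfolding LL_def by (rule sum.cong) (simp_all add: gval right_diff_distrib)
      also have "\<dots> = (\<Sum>\<beta>\<in>K. ?phi \<beta> * (f0 r (vadd \<beta> \<gamma>) \<gamma> * x (vadd \<beta> \<gamma>))) - (\<Sum>\<beta>\<in>K. ?phi \<beta> * x \<beta>)"
        by (simp add: sum_subtractf)
      also have "(\<Sum>\<beta>\<in>K. ?phi \<beta> * (f0 r (vadd \<beta> \<gamma>) \<gamma> * x (vadd \<beta> \<gamma>)))
           = (\<Sum>\<beta>\<in>K. ?phi (vadd \<beta> \<gamma>) * (f0 r \<beta> \<gamma> * x \<beta>))"
      proof (rule sum.reindex_bij_witness[of K "\<lambda>\<beta>. vadd \<beta> \<gamma>" "\<lambda>\<beta>. vadd \<beta> \<gamma>"])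
        fix a assume "a \<in> K"
        show "vadd (vadd a \<gamma>) \<gamma> = a" by (simp add: vadd_assoc)
        show "vadd a \<gamma> \<in> K" using KF(3) gH \<open>a \<in> K\<close> by blast
        show "?phi (vadd (vadd a \<gamma>) \<gamma>) * (f0 r (vadd a \<gamma>) \<gamma> * x (vadd a \<gamma>)) =
              ?phi a * (f0 r (vadd a \<gamma>) \<gamma> * x (vadd a \<gamma>))" by (simp add: vadd_assoc)
      next
        fix b assume "b \<in> K"
        show "vadd (vadd b \<gamma>) \<gamma> = b" by (simp add: vadd_assoc)
        show "vadd b \<gamma> \<in> K" using KF(3) gH \<open>b \<in> K\<close> by blast
      qed
      also have "\<dots> = (\<Sum>\<beta>\<in>K. ?phi \<beta> * x \<beta>)"
      proof (rule sum.cong)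
        fix \<beta> assume b: "\<beta> \<in> K"
        show "?phi (vadd \<beta> \<gamma>) * (f0 r \<beta> \<gamma> * x \<beta>) = ?phi \<beta> * x \<beta>"
          using phi[OF K b gH] by (metis mult.assoc)
      qed simp
      finally show ?thesis by simp
    qed
  qed
  have LL0: "LL K 0 = 0" for K by (simp add: LL_def)
  have LLadd: "LL K (f + g) = LL K f + LL K g" for K f g
    by (simp add: LL_def distrib_left sum.distrib)
  have LLsc: "LL K (cscale c f) = c * LL K f" for K c f
    by (simp add: LL_def cscale_def sum_distrib_left mult.left_commute)
  have van: "LL K w = 0" if K: "K \<in> I" and w: "w \<in> cs.span (Srel r G)" for K w
  proof -
    have "w \<in> cs.span (Srelgen r G)" using w unfolding Srel_def cs.span_span .
    then show ?thesis
    proof (induction rule: cs.span_induct_alt)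
      case base then show ?case by (rule LL0)
    next
      case (step c x y)
      have "LL K (cscale c x + y) = c * LL K x + LL K y" by (simp only: LLadd LLsc)
      moreover have "(\<lambda>a. cscale c x a + y a) = cscale c x + y" by (simp add: fun_eq_iff)
      ultimately show ?case using van_gen[OF K] step by simp
    qed
  qed
  have diag: "LL K (bb K') = (if K = K' then 1 else 0)" if K: "K \<in> I" and K': "K' \<in> I" for K K'
  proof -
    have "LL K (bb K') = (\<Sum>\<beta>\<in>K. if \<beta> = rep K' then f0 r (rep K) (vadd \<beta> (rep K)) else 0)"
      unfolding LL_def bb_def by (rule sum.cong) (auto simp: dl_def)
    also have "\<dots> = (if rep K' \<in> K then f0 r (rep K) (vadd (rep K') (rep K)) else 0)"
      using Kfin[OF K] by (simp add: sum.delta')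
    also have "\<dots> = (if K = K' then 1 else 0)"
    proof (cases "K = K'")
      case True
      then show ?thesis using Kfacts[OF K] by (simp add: f0_emptyR)
    next
      case False
      have d0: "d0 \<in> DG r G" using Kfacts[OF K] by blast
      have Hc: "\<forall>h\<in>H. \<forall>h'\<in>H. vadd h h' \<in> H" using HP(3)[OF d0] H_def by simp
      have "rep K' \<notin> K"
      proof
        assume "rep K' \<in> K"
        then have "cst H (rep K') = cst H (rep K)" using coset_eq[OF Hc] Kfacts[OF K] by metis
        then show False using Kfacts[OF K] Kfacts[OF K'] False by metis
      qed
      then show ?thesis using False by simp
    qed
    finally show ?thesis .
  qed
  have Srel_gen: "Srelgen r G \<subseteq> Srel r G" unfolding Srel_def by (rule cs.span_superset)
  have Wsub: "Srel r G \<subseteq> cs.span (dl ` (DG r G \<times> CG r G))"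
    unfolding Srel_def
  proof (rule cs.span_minimal[OF _ cs.subspace_span], rule subsetI)
    fix g assume g: "g \<in> Srelgen r G"
    obtain d x \<gamma> where gd: "g = (\<lambda>(d', \<beta>). if d' = d then (twmul r G x (ebas \<gamma>) \<beta> - x \<beta>) else 0)"
      and d: "d \<in> DG r G" and x: "suppIn x (CG r G)" and \<gamma>: "\<gamma> \<in> Deltad r d"
      using g unfolding Srelgen_def by blast
    have gCG: "\<gamma> \<in> CG r G" using HP(1)[OF d] \<gamma> by auto
    have "\<forall>p. g p \<noteq> 0 \<longrightarrow> p \<in> DG r G \<times> CG r G"
    proof (intro allI impI)
      fix p assume gp: "g p \<noteq> 0"
      obtain d' \<beta> where p: "p = (d', \<beta>)" by (cases p)
      have dd: "d' = d" and ne: "twmul r G x (ebas \<gamma>) \<beta> \<noteq> 0 \<or> x \<beta> \<noteq> 0"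
        using gp by (auto simp: gd p split: if_splits)
      have "\<beta> \<in> CG r G"
      proof (cases "x \<beta> \<noteq> 0")
        case True then show ?thesis using x by (simp add: suppIn_def)
      next
        case False
        then have "vadd \<beta> \<gamma> \<in> CG r G" using ne twmul_ebas[OF gCG] by (auto split: if_splits)
        then have "vadd (vadd \<beta> \<gamma>) \<gamma> \<in> CG r G" using CG_vadd gCG by blast
        then show ?thesis by (simp add: vadd_assoc)
      qed
      then show "p \<in> DG r G \<times> CG r G" using p dd d by simp
    qed
    then show "g \<in> cs.span (dl ` (DG r G \<times> CG r G))"
      by (intro supp_span) (simp_all add: finite_DG[OF r sg one] finite_CG)
  qed
  have DE: "cs.dim (bb ` I \<union> Srel r G) = card I + cs.dim (Srel r G)"
    by (rule dim_extend[where Fin = "dl ` (DG r G \<times> CG r G)" and L = LL, OF finI _ Wsub])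
       (simp_all add: LLadd LLsc van diag finite_DG[OF r sg one] finite_CG)
  have SG_eq: "{(\<lambda>p. if p = (d, \<alpha>) then 1 else 0) | d \<alpha>. d \<in> DG r G \<and> \<alpha> \<in> CG r G \<and> (d, vmul (dperp r d) \<alpha>) = \<mu>}
      = (\<lambda>\<alpha>. dl (d0, \<alpha>)) ` F"
    by (auto simp: dl_def F_def Fset_def mu)
  have Shom_eq: "Shom r G \<mu> = cs.span ((\<lambda>\<alpha>. dl (d0, \<alpha>)) ` F)"
    unfolding Shom_def SG_eq ..
  have dl_in: "dl (d0, \<alpha>) \<in> cs.span (bb ` I \<union> Srel r G)" if a: "\<alpha> \<in> F" for \<alpha>
  proof -
    define K where "K = cst H \<alpha>"
    have K: "K \<in> I" using a K_def I_def by simp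
    have KF: "d0 \<in> DG r G" "rep K \<in> K" "K \<subseteq> F" using Kfacts[OF K] by auto
    have Hc: "\<forall>h\<in>H. \<forall>h'\<in>H. vadd h h' \<in> H" using HP(3)[OF KF(1)] H_def by simp
    obtain h where h: "h \<in> H" "rep K = vadd \<alpha> h" using KF(2) K_def by (auto simp: cst_def)
    let ?a = "rep K"
    have aCG: "?a \<in> CG r G" using KF FCG by auto
    have hCG: "h \<in> CG r G" using HP(1)[OF KF(1)] h H_def by auto
    have al: "\<alpha> = vadd ?a h" using h by (simp add: vadd_assoc)
    define g where "g = (\<lambda>(d', \<beta>). if d' = d0 then (twmul r G (ebas ?a) (ebas h) \<beta> - ebas ?a \<beta>) else 0)"
    have gS: "g \<in> Srelgen r G"
    proof -
      have sx: "suppIn (ebas ?a) (CG r G)" using aCG by (simp add: suppIn_def ebas_def)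
      have hd: "h \<in> Deltad r d0" using h(1) H_def by simp
      show ?thesis unfolding Srelgen_def g_def
        by (intro CollectI exI[of _ d0] exI[of _ "ebas ?a"] exI[of _ h] conjI refl KF(1) sx hd)
    qed
    have geq: "g = cscale (f0 r ?a h) (dl (d0, \<alpha>)) - dl (d0, ?a)"
    proof
      fix q :: "nat set \<times> nat set"
      obtain d' \<beta> where q: "q = (d', \<beta>)" by (cases q)
      have tw: "twmul r G (ebas ?a) (ebas h) \<beta> = (if \<beta> = \<alpha> then f0 r ?a h else 0)"
      proof -
        have "vadd \<beta> h = ?a \<longleftrightarrow> \<beta> = \<alpha>" using vadd_eq_iff[of \<beta> h ?a] al by simp
        moreover have "twmul r G (ebas ?a) (ebas h) \<beta> = (if vadd \<beta> h \<in> CG r G then eps r (vadd \<beta> h) h * ebas ?a (vadd \<beta> h) else 0)"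
          by (rule twmul_ebas[OF hCG])
        ultimately show ?thesis using aCG by (auto simp: ebas_def eps_eq)
      qed
      show "g q = (cscale (f0 r ?a h) (dl (d0, \<alpha>)) - dl (d0, ?a)) q"
        using ebas_app[of ?a] by (simp add: g_def q tw cscale_def dl_def)
    qed
    have "dl (d0, \<alpha>) = cscale (f0 r ?a h) (g + dl (d0, ?a))"
      unfolding geq
    proof
      fix q :: "nat set \<times> nat set"
      show "dl (d0, \<alpha>) q = cscale (f0 r ?a h) (cscale (f0 r ?a h) (dl (d0, \<alpha>)) - dl (d0, ?a) + dl (d0, ?a)) q"
        using f0_sq[of r ?a h] by (simp add: cscale_def mult.assoc[symmetric])
    qed
    note eqdl = this
    have "g \<in> Srel r G" using gS Srel_gen by blast
    then have g1: "g \<in> cs.span (bb ` I \<union> Srel r G)" by (intro cs.span_base) simp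
    have "bb K \<in> bb ` I" using K by blast
    moreover have "dl (d0, ?a) = bb K" by (simp add: bb_def)
    ultimately have g2: "dl (d0, ?a) \<in> cs.span (bb ` I \<union> Srel r G)" by (intro cs.span_base) simp
    have "g + dl (d0, ?a) \<in> cs.span (bb ` I \<union> Srel r G)" using g1 g2 by (intro cs.span_add)
    then have "cscale (f0 r ?a h) (g + dl (d0, ?a)) \<in> cs.span (bb ` I \<union> Srel r G)" by (rule cs.span_scale)
    then show ?thesis using eqdl by simp
  qed
  have sp: "cs.span (Shom r G \<mu> \<union> Srel r G) = cs.span (bb ` I \<union> Srel r G)"
  proof (rule cs.span_eq[THEN iffD2], rule conjI)
    have "cs.span ((\<lambda>\<alpha>. dl (d0, \<alpha>)) ` F) \<subseteq> cs.span (bb ` I \<union> Srel r G)"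
      using dl_in by (intro cs.span_minimal[OF _ cs.subspace_span]) auto
    then have A: "Shom r G \<mu> \<subseteq> cs.span (bb ` I \<union> Srel r G)" unfolding Shom_eq .
    have B: "Srel r G \<subseteq> cs.span (bb ` I \<union> Srel r G)"
      using cs.span_superset[of "bb ` I \<union> Srel r G"] by blast
    show "Shom r G \<mu> \<union> Srel r G \<subseteq> cs.span (bb ` I \<union> Srel r G)" using A B by (rule Un_least)
    have C: "bb ` I \<subseteq> Shom r G \<mu>"
    proof
      fix v assume "v \<in> bb ` I"
      then obtain K where K: "K \<in> I" "v = bb K" by blast
      then have "rep K \<in> F" using Kfacts[OF K(1)] by blast
      then have "dl (d0, rep K) \<in> (\<lambda>\<alpha>. dl (d0, \<alpha>)) ` F" by blast
      then have "dl (d0, rep K) \<in> Shom r G \<mu>" unfolding Shom_eq by (rule cs.span_base)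
      then show "v \<in> Shom r G \<mu>" using K(2) by (simp add: bb_def)
    qed
    have D: "Shom r G \<mu> \<union> Srel r G \<subseteq> cs.span (Shom r G \<mu> \<union> Srel r G)"
      by (rule cs.span_superset)
    show "bb ` I \<union> Srel r G \<subseteq> cs.span (Shom r G \<mu> \<union> Srel r G)"
      using C D by blast
  qed
  have "dimSG r G \<mu> = cs.dim (bb ` I \<union> Srel r G) - cs.dim (Srel r G)"
    unfolding dimSG_def using cs.span_eq_dim[OF sp] by simp
  also have "\<dots> = card I" using DE by simp
  finally show ?thesis by (simp add: I_def H_def F_def mu)
qed

end


context
  fixes r :: nat and G :: "nat set set"
  assumes r: "r \<ge> 1" and sg: "is_subgroup_Z2 r G" and one: "ones r \<in> G"
begin

lemma CG_sub2: "\<beta> \<in> CG r G \<Longrightarrow> \<beta> \<subseteq> {..<2*r}" using CG_sub[of r G] by auto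

lemma F_closed:
  assumes a: "\<alpha> \<in> Fset r G \<mu>" and h: "h \<in> Deltad r (fst \<mu>)"
  shows "vadd \<alpha> h \<in> Fset r G \<mu>"
proof -
  obtain d0 c where mu: "\<mu> = (d0, c)" by (cases \<mu>)
  have d0: "d0 \<in> DG r G" and aC: "\<alpha> \<in> CG r G" and ac: "vmul (dperp r d0) \<alpha> = c"
    using a by (auto simp: Fset_def mu)
  note HP = H_props[OF r sg one d0]
  have hC: "h \<in> CG r G" and hd: "h \<subseteq> d0" using HP(1,4) h mu by auto
  have "vadd \<alpha> h \<in> CG r G" using CG_vadd aC hC by blast
  moreover have "vmul (dperp r d0) (vadd \<alpha> h) = vmul (dperp r d0) \<alpha>"
  proof -
    have "h \<subseteq> {..<2*r}" using hC CG_sub2 by auto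
    then show ?thesis using hd by (auto simp: vmul_def vadd_def dperp_def ones_def)
  qed
  ultimately show ?thesis using d0 ac by (simp add: Fset_def mu)
qed

lemma CGd_closed:
  assumes d: "d \<in> DG r G" and b: "\<beta> \<in> CGd r G d" and h: "h \<in> Deltad r d"
  shows "vadd \<beta> h \<in> CGd r G d"
proof -
  note HP = H_props[OF r sg one d]
  have hC: "h \<in> CG r G" and hd: "h \<subseteq> d" using HP(1,4) h by auto
  have bC: "\<beta> \<in> CG r G" and bd: "\<beta> \<subseteq> d" using b by (auto simp: CGd_def Z2sub_def vmul_def)
  have "vadd \<beta> h \<in> CG r G" using CG_vadd bC hC by blast
  moreover have "vadd \<beta> h \<subseteq> d" using bd hd by (auto simp: vadd_def)
  moreover have "vadd \<beta> h \<subseteq> {..<2*r}" using CG_sub2 calculation(1) by blast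
  ultimately show ?thesis by (auto simp: CGd_def Z2sub_def Z2_def vmul_def)
qed

lemma card_F_CGd:
  assumes d: "d \<in> DG r G" and a: "\<alpha> \<in> CG r G"
  shows "card (Fset r G (d, vmul (dperp r d) \<alpha>)) = card (CGd r G d)"
proof -
  let ?F = "Fset r G (d, vmul (dperp r d) \<alpha>)"
  have Fe: "?F = {\<beta> \<in> CG r G. \<beta> - d = \<alpha> - d}"
    using d CG_sub2 a by (auto simp: Fset_def dperp_mul)
  have im: "vadd \<alpha> ` ?F = CGd r G d"
  proof
    show "vadd \<alpha> ` ?F \<subseteq> CGd r G d"
    proof
      fix x assume "x \<in> vadd \<alpha> ` ?F"
      then obtain \<beta> where b: "\<beta> \<in> CG r G" "\<beta> - d = \<alpha> - d" "x = vadd \<alpha> \<beta>" using Fe by auto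
      have "x \<in> CG r G" using b CG_vadd a by blast
      moreover have "x \<subseteq> d" using b(2,3) by (auto simp: vadd_def)
      moreover have "x \<subseteq> {..<2*r}" using CG_sub2 calculation(1) by blast
      ultimately show "x \<in> CGd r G d" by (auto simp: CGd_def Z2sub_def Z2_def vmul_def)
    qed
    show "CGd r G d \<subseteq> vadd \<alpha> ` ?F"
    proof
      fix x assume x: "x \<in> CGd r G d"
      have xC: "x \<in> CG r G" and xd: "x \<subseteq> d" using x by (auto simp: CGd_def Z2sub_def vmul_def)
      have "vadd \<alpha> x \<in> CG r G" using CG_vadd a xC by blast
      moreover have "vadd \<alpha> x - d = \<alpha> - d" using xd by (auto simp: vadd_def)
      ultimately have "vadd \<alpha> x \<in> ?F" using Fe by auto
      moreover have "x = vadd \<alpha> (vadd \<alpha> x)" by (simp add: vadd_cancel)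
      ultimately show "x \<in> vadd \<alpha> ` ?F" by blast
    qed
  qed
  have "card (vadd \<alpha> ` ?F) = card ?F" by (rule card_image[OF inj_vadd])
  then show ?thesis using im by simp
qed

lemma count_F:
  assumes d: "fst \<mu> \<in> DG r G"
  shows "card (Fset r G \<mu>) = 2 ^ wl r (fst \<mu>) * card (cst (Deltad r (fst \<mu>)) ` Fset r G \<mu>)"
proof -
  note HP = H_props[OF r sg one d]
  have "finite (Fset r G \<mu>)" using finite_CG[of r G] by (rule finite_subset[rotated]) (auto simp: Fset_def)
  then show ?thesis
    using coset_count[of "Fset r G \<mu>" "Deltad r (fst \<mu>)"] HP F_closed by auto
qed

lemma count_CGd:
  assumes d: "d \<in> DG r G"
  shows "card (CGd r G d) = 2 ^ wl r d * card (cst (Deltad r d) ` CGd r G d)"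
proof -
  note HP = H_props[OF r sg one d]
  have "finite (CGd r G d)" using finite_CG[of r G] by (rule finite_subset[rotated]) (auto simp: CGd_def)
  then show ?thesis
    using coset_count[of "CGd r G d" "Deltad r d"] HP CGd_closed[OF d] by auto
qed

end


theorem mainTheorem14:
  fixes r :: nat and G :: "nat set set"
  assumes "r \<ge> 1"
    and "is_subgroup_Z2 r G"
    and "ones r \<in> G"
  shows "(\<forall>\<mu>\<in>ISrr r. real (dimSG r G \<mu>) =
            (\<Sum>d\<in>DG r G. \<Sum>\<alpha>\<in>CG r G.
               if (d, vmul (dperp r d) \<alpha>) = \<mu> then 1 / 2 ^ wl r d else 0))
       \<and> (\<forall>d\<in>DG r G. \<forall>\<alpha>\<in>CG r G.
            dimSG r G (d, vmul (dperp r d) \<alpha>)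
              = card ((\<lambda>\<beta>. vadd \<beta> ` Deltad r d) ` CGd r G d)
            \<and> real (dimSG r G (d, vmul (dperp r d) \<alpha>))
              = real (card (CGd r G d)) / 2 ^ wl r d)"
proof (intro conjI ballI)
  note r = assms(1) and sg = assms(2) and one = assms(3)
  have cst_eq: "(\<lambda>\<beta>. vadd \<beta> ` H) = cst H" for H by (simp add: fun_eq_iff cst_def)
  {
    fix \<mu> assume "\<mu> \<in> ISrr r"
    obtain d0 c where mu: "\<mu> = (d0, c)" by (cases \<mu>)
    define g where "g d = (\<Sum>\<alpha>\<in>CG r G. if (d, vmul (dperp r d) \<alpha>) = \<mu> then 1 / 2 ^ wl r d else (0::real))" for d
    have "(\<Sum>d\<in>DG r G. g d) = (\<Sum>d\<in>DG r G. if d = d0 then g d0 else 0)"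
      by (rule sum.cong) (auto simp: g_def mu)
    also have "\<dots> = (if d0 \<in> DG r G then g d0 else 0)"
      using finite_DG[OF r sg one] by (simp add: sum.delta')
    finally have S: "(\<Sum>d\<in>DG r G. g d) = (if d0 \<in> DG r G then g d0 else 0)" .
    show "real (dimSG r G \<mu>) = (\<Sum>d\<in>DG r G. \<Sum>\<alpha>\<in>CG r G.
               if (d, vmul (dperp r d) \<alpha>) = \<mu> then 1 / 2 ^ wl r d else 0)"
    proof (cases "d0 \<in> DG r G")
      case False
      then have "Fset r G \<mu> = {}" by (auto simp: Fset_def mu)
      then show ?thesis using S False unfolding g_def dimSG_eq[OF r sg one] by simp
    next
      case True
      have Fe: "Fset r G \<mu> = {\<alpha> \<in> CG r G. (d0, vmul (dperp r d0) \<alpha>) = \<mu>}"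
        using True by (auto simp: Fset_def mu)
      have "g d0 = (\<Sum>\<alpha>\<in>Fset r G \<mu>. 1 / 2 ^ wl r d0)"
        unfolding g_def Fe by (rule sum.inter_filter[symmetric]) (rule finite_CG)
      also have "\<dots> = real (card (Fset r G \<mu>)) / 2 ^ wl r d0" by simp
      finally have gd: "g d0 = real (card (Fset r G \<mu>)) / 2 ^ wl r d0" .
      have cnt: "card (Fset r G \<mu>) = 2 ^ wl r d0 * card (cst (Deltad r d0) ` Fset r G \<mu>)"
        using count_F[OF r sg one, of \<mu>] True mu by simp
      have "real (dimSG r G \<mu>) = real (card (cst (Deltad r d0) ` Fset r G \<mu>))"
        using dimSG_eq[OF r sg one, of \<mu>] mu by simp
      also have "\<dots> = real (card (Fset r G \<mu>)) / 2 ^ wl r d0"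
        unfolding cnt by simp
      finally show ?thesis using S True gd unfolding g_def by simp
    qed
  }
  {
    fix d \<alpha> assume d: "d \<in> DG r G" and a: "\<alpha> \<in> CG r G"
    let ?\<mu> = "(d, vmul (dperp r d) \<alpha>)"
    have dim: "dimSG r G ?\<mu> = card (cst (Deltad r d) ` Fset r G ?\<mu>)"
      using dimSG_eq[OF r sg one, of ?\<mu>] by simp
    have c1: "card (Fset r G ?\<mu>) = 2 ^ wl r d * card (cst (Deltad r d) ` Fset r G ?\<mu>)"
      using count_F[OF r sg one, of ?\<mu>] d by simp
    have c2: "card (CGd r G d) = 2 ^ wl r d * card (cst (Deltad r d) ` CGd r G d)"
      using count_CGd[OF r sg one d] .
    have c3: "card (Fset r G ?\<mu>) = card (CGd r G d)" using card_F_CGd[OF r sg one d a] .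
    have eq: "card (cst (Deltad r d) ` Fset r G ?\<mu>) = card (cst (Deltad r d) ` CGd r G d)"
    proof -
      have "(2::nat) ^ wl r d * card (cst (Deltad r d) ` Fset r G ?\<mu>) = 2 ^ wl r d * card (cst (Deltad r d) ` CGd r G d)"
        using c1 c2 c3 by simp
      moreover have pos: "(2::nat) ^ wl r d \<noteq> 0" by simp
      ultimately show ?thesis using mult_left_cancel[OF pos] by blast
    qed
    show "dimSG r G ?\<mu> = card ((\<lambda>\<beta>. vadd \<beta> ` Deltad r d) ` CGd r G d)"
      unfolding cst_eq dim eq ..
    show "real (dimSG r G ?\<mu>) = real (card (CGd r G d)) / 2 ^ wl r d"
      unfolding dim eq c2 by simp
  }
qed


end
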